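(* Let $k$ be an algebraically closed field of characteristic zero, $n\ge1$, $q\in k$ a primitive $2n$-th root of unity, $a\in k$, and let $H_{4n}$ be the Hopf algebra generated by $z,x$ with relations $z^{2n}=1$, $zx=qxz$, $x^2=0$ and $\Delta(z)=z\otimes z+a(1-q^{-2})z^{n+1}x\otimes zx$, $\Delta(x)=x\otimes 1+z^n\otimes x$, $\epsilon(z)=1$, $\epsilon(x)=0$, $S(z)=z^{-1}$, $S(x)=-z^nx$. For integers $j$ let $E_j=\frac{1}{2n}\sum_{i=0}^{2n-1}q^{-ij}z^i$. Then $H_{4n}$ is a quasi-triangular Hopf algebra with universal $R$-matrix $$R=\sum_{i,j=0}^{2n-1}(-1)^{ij}E_i\otimes E_j+2a\sum_{i,j=0}^{2n-1}(-1)^{i(j+1)}E_ix\otimes E_jx.$$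
   Context: A pair $(H,R)$ with $H$ a finite-dimensional Hopf algebra and $R\in H\otimes H$ invertible is quasi-triangular (with universal $R$-matrix $R$) if $\Delta^{op}(h)=R\Delta(h)R^{-1}$ for all $h\in H$, $(\Delta\otimes \mathrm{id})(R)=R_{13}R_{23}$ and $(\mathrm{id}\otimes\Delta)(R)=R_{13}R_{12}$, where $\Delta^{op}=\tau\circ\Delta$ with $\tau$ the flip, $R_{12}=R\otimes 1$, $R_{23}=1\otimes R$, $R_{13}=(\tau\otimes\mathrm{id})(R_{23})$. *)

theory Defs
  imports "HOL-Computational_Algebra.Polynomial"
begin

text \<open>
  By the relations z^{2n}=1, zx=qxz, x^2=0 the algebra has
  the basis z^i x^e (0 <= i < 2n, e in {0,1}), with multiplication
  z^i x^e * z^j x^f = q^{-ej} z^{i+j} x^{e+f}  (zero if e+f = 2).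
  A basis element of H^{\<otimes>m} is a word of length m of index pairs (i,e);
  an element of H^{\<otimes>m} is a coefficient function on words, supported on valid words.
\<close>

type_synonym 'k tens = "(nat \<times> nat) list \<Rightarrow> 'k"

definition Wd :: "nat \<Rightarrow> nat \<Rightarrow> (nat \<times> nat) list set" where
  "Wd n m = {w. length w = m \<and> (\<forall>p\<in>set w. fst p < 2*n \<and> snd p < 2)}"

definition supported :: "nat \<Rightarrow> nat \<Rightarrow> 'k::zero tens \<Rightarrow> bool" where
  "supported n m f \<longleftrightarrow> (\<forall>w. w \<notin> Wd n m \<longrightarrow> f w = 0)"

definition bcoef :: "'k::field \<Rightarrow> nat \<times> nat \<Rightarrow> nat \<times> nat \<Rightarrow> 'k" where
  "bcoef q u v = (if snd u + snd v < 2 then inverse q ^ (snd u * fst v) else 0)"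

definition bidx :: "nat \<Rightarrow> nat \<times> nat \<Rightarrow> nat \<times> nat \<Rightarrow> nat \<times> nat" where
  "bidx n u v = ((fst u + fst v) mod (2*n), snd u + snd v)"

definition wcoef :: "'k::field \<Rightarrow> (nat \<times> nat) list \<Rightarrow> (nat \<times> nat) list \<Rightarrow> 'k" where
  "wcoef q u v = (\<Prod>k<length u. bcoef q (u!k) (v!k))"

definition widx :: "nat \<Rightarrow> (nat \<times> nat) list \<Rightarrow> (nat \<times> nat) list \<Rightarrow> (nat \<times> nat) list" where
  "widx n u v = map2 (bidx n) u v"

definition tmul :: "nat \<Rightarrow> 'k::field \<Rightarrow> nat \<Rightarrow> 'k tens \<Rightarrow> 'k tens \<Rightarrow> 'k tens" where
  "tmul n q m f g = (\<lambda>w. \<Sum>u\<in>Wd n m. \<Sum>v\<in>Wd n m.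
       if widx n u v = w then f u * g v * wcoef q u v else 0)"

definition basis_el :: "(nat \<times> nat) list \<Rightarrow> 'k::{zero,one} tens" where
  "basis_el u = (\<lambda>w. if w = u then 1 else 0)"

definition tone :: "nat \<Rightarrow> 'k::{zero,one} tens" where
  "tone m = basis_el (replicate m (0,0))"

definition tzero :: "'k::zero tens" where
  "tzero = (\<lambda>w. 0)"

definition tadd :: "'k::plus tens \<Rightarrow> 'k tens \<Rightarrow> 'k tens" where
  "tadd f g = (\<lambda>w. f w + g w)"

definition tscale :: "'k::times \<Rightarrow> 'k tens \<Rightarrow> 'k tens" where
  "tscale c f = (\<lambda>w. c * f w)"

definition tsum :: "('a \<Rightarrow> 'k::comm_monoid_add tens) \<Rightarrow> 'a set \<Rightarrow> 'k tens" where
  "tsum F A = (\<lambda>w. \<Sum>a\<in>A. F a w)"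

fun tpow :: "nat \<Rightarrow> 'k::field \<Rightarrow> nat \<Rightarrow> 'k tens \<Rightarrow> nat \<Rightarrow> 'k tens" where
  "tpow n q m f 0 = tone m"
| "tpow n q m f (Suc k) = tmul n q m (tpow n q m f k) f"

definition ttensor :: "nat \<Rightarrow> nat \<Rightarrow> 'k::{times,zero} tens \<Rightarrow> 'k tens \<Rightarrow> 'k tens" where
  "ttensor m1 m2 f g = (\<lambda>w. if length w = m1 + m2 then f (take m1 w) * g (drop m1 w) else 0)"

definition linext :: "nat \<Rightarrow> nat \<Rightarrow> ((nat \<times> nat) list \<Rightarrow> 'k::comm_ring_1 tens) \<Rightarrow> 'k tens \<Rightarrow> 'k tens" where
  "linext n m D f = (\<lambda>w. \<Sum>u\<in>Wd n m. f u * D u w)"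

definition zgen :: "nat \<Rightarrow> 'k::{zero,one} tens" where
  "zgen n = basis_el [(1 mod (2*n), 0)]"

definition xgen :: "'k::{zero,one} tens" where
  "xgen = basis_el [(0, 1)]"

definition Hmul where "Hmul n q = tmul n q 1"
definition H2mul where "H2mul n q = tmul n q 2"
definition H3mul where "H3mul n q = tmul n q 3"

definition zpow :: "nat \<Rightarrow> 'k::field \<Rightarrow> nat \<Rightarrow> 'k tens" where
  "zpow n q i = tpow n q 1 (zgen n) i"

definition Delta_z :: "nat \<Rightarrow> 'k::field \<Rightarrow> 'k \<Rightarrow> 'k tens" where
  "Delta_z n q a = tadd (ttensor 1 1 (zgen n) (zgen n))
     (tscale (a * (1 - inverse q ^ 2))
        (ttensor 1 1 (Hmul n q (zpow n q (n+1)) xgen) (Hmul n q (zgen n) xgen)))"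

definition Delta_x :: "nat \<Rightarrow> 'k::field \<Rightarrow> 'k tens" where
  "Delta_x n q = tadd (ttensor 1 1 xgen (tone 1)) (ttensor 1 1 (zpow n q n) xgen)"

definition Delta_basis :: "nat \<Rightarrow> 'k::field \<Rightarrow> 'k \<Rightarrow> (nat \<times> nat) list \<Rightarrow> 'k tens" where
  "Delta_basis n q a u = H2mul n q (tpow n q 2 (Delta_z n q a) (fst (hd u)))
                                   (tpow n q 2 (Delta_x n q) (snd (hd u)))"

definition Delta :: "nat \<Rightarrow> 'k::field \<Rightarrow> 'k \<Rightarrow> 'k tens \<Rightarrow> 'k tens" where
  "Delta n q a = linext n 1 (Delta_basis n q a)"

definition flip2 :: "'k tens \<Rightarrow> 'k tens" where
  "flip2 f = (\<lambda>w. f (rev w))"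

definition Delta_op where "Delta_op n q a h = flip2 (Delta n q a h)"

definition Delta_id :: "nat \<Rightarrow> 'k::field \<Rightarrow> 'k \<Rightarrow> 'k tens \<Rightarrow> 'k tens" where
  "Delta_id n q a = linext n 2 (\<lambda>u. ttensor 2 1 (Delta n q a (basis_el [u!0])) (basis_el [u!1]))"

definition id_Delta :: "nat \<Rightarrow> 'k::field \<Rightarrow> 'k \<Rightarrow> 'k tens \<Rightarrow> 'k tens" where
  "id_Delta n q a = linext n 2 (\<lambda>u. ttensor 1 2 (basis_el [u!0]) (Delta n q a (basis_el [u!1])))"

definition R12 :: "'k::{zero,one,times} tens \<Rightarrow> 'k tens" where
  "R12 R = ttensor 2 1 R (tone 1)"
definition R23 :: "'k::{zero,one,times} tens \<Rightarrow> 'k tens" where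
  "R23 R = ttensor 1 2 (tone 1) R"
definition R13 :: "'k::{zero,one,times} tens \<Rightarrow> 'k tens" where
  "R13 R = (\<lambda>w. if length w = 3 then R [w!0, w!2] * tone 1 [w!1] else 0)"

definition quasi_triangular :: "nat \<Rightarrow> 'k::field \<Rightarrow> 'k \<Rightarrow> 'k tens \<Rightarrow> bool" where
  "quasi_triangular n q a R \<longleftrightarrow>
     supported n 2 R \<and>
     (\<exists>Ri. supported n 2 Ri \<and> H2mul n q R Ri = tone 2 \<and> H2mul n q Ri R = tone 2 \<and>
        (\<forall>h. supported n 1 h \<longrightarrow>
             Delta_op n q a h = H2mul n q (H2mul n q R (Delta n q a h)) Ri)) \<and>
     Delta_id n q a R = H3mul n q (R13 R) (R23 R) \<and>
     id_Delta n q a R = H3mul n q (R13 R) (R12 R)"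

definition Eidem :: "nat \<Rightarrow> 'k::field \<Rightarrow> nat \<Rightarrow> 'k tens" where
  "Eidem n q j = tscale (inverse (of_nat (2*n)))
      (tsum (\<lambda>i. tscale (inverse q ^ (i*j)) (zpow n q i)) {..<2*n})"

definition Rmat :: "nat \<Rightarrow> 'k::field \<Rightarrow> 'k \<Rightarrow> 'k tens" where
  "Rmat n q a = tadd
     (tsum (\<lambda>(i,j). tscale ((-1) ^ (i*j)) (ttensor 1 1 (Eidem n q i) (Eidem n q j)))
           ({..<2*n} \<times> {..<2*n}))
     (tscale (2*a)
     (tsum (\<lambda>(i,j). tscale ((-1) ^ (i*(j+1)))
              (ttensor 1 1 (Hmul n q (Eidem n q i) xgen) (Hmul n q (Eidem n q j) xgen)))
           ({..<2*n} \<times> {..<2*n})))"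

definition primitive_root :: "nat \<Rightarrow> 'k::field \<Rightarrow> bool" where
  "primitive_root m q \<longleftrightarrow> q ^ m = 1 \<and> (\<forall>k. 0 < k \<and> k < m \<longrightarrow> q ^ k \<noteq> 1)"

end

theory Submission
  imports Defs
begin

lemma basis_el_apply: "basis_el u w = (if w = u then 1 else 0)"
  by (simp add: basis_el_def)

lemma Wd_Nil[simp]: "[] \<in> Wd n m \<longleftrightarrow> m = 0"
  by (auto simp: Wd_def)

lemma Wd_Cons[simp]: "x # w \<in> Wd n m \<longleftrightarrow> m \<noteq> 0 \<and> fst x < 2*n \<and> snd x < 2 \<and> w \<in> Wd n (m - 1)"
  by (cases m) (auto simp: Wd_def)

lemma Wd_length: "w \<in> Wd n m \<Longrightarrow> length w = m"
  by (simp add: Wd_def)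

lemma finite_Wd[simp]: "finite (Wd n m)"
proof -
  have "Wd n m \<subseteq> {w. set w \<subseteq> ({..<2*n} \<times> {..<2}) \<and> length w = m}"
    by (auto simp: Wd_def)
  moreover have "finite {w. set w \<subseteq> ({..<2*n} \<times> {..<2::nat}) \<and> length w = m}"
    by (rule finite_lists_length_eq) auto
  ultimately show ?thesis by (rule finite_subset)
qed

lemma wcoef_Nil[simp]: "wcoef q [] v = 1"
  by (simp add: wcoef_def)

lemma wcoef_Cons[simp]: "wcoef q (a # u) (c # v) = bcoef q a c * wcoef q u v"
  unfolding wcoef_def by (simp del: prod.lessThan_Suc add: prod.lessThan_Suc_shift)

lemma widx_Nil[simp]: "widx n [] v = []" by (simp add: widx_def)
lemma widx_Cons[simp]: "widx n (a # u) (c # v) = bidx n a c # widx n u v" by (simp add: widx_def)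

lemma bcoef_simp[simp]: "bcoef q (i,e) (j,f) = (if e + f < 2 then inverse q ^ (e * j) else 0)"
  by (simp add: bcoef_def)
lemma bidx_simp[simp]: "bidx n (i,e) (j,f) = ((i+j) mod (2*n), e + f)"
  by (simp add: bidx_def)

lemma tmul_basis:
  assumes "u \<in> Wd n m" "v \<in> Wd n m"
  shows "tmul n q m (basis_el u) (basis_el v) = tscale (wcoef q u v) (basis_el (widx n u v))"
proof
  fix w
  let ?c = "(if widx n u v = w then wcoef q u v else 0)"
  have "tmul n q m (basis_el u) (basis_el v) w =
     (\<Sum>u'\<in>Wd n m. \<Sum>v'\<in>Wd n m. if u' = u then (if v' = v then ?c else 0) else 0)"
    unfolding tmul_def basis_el_def by (intro sum.cong refl) auto
  also have "\<dots> = (\<Sum>u'\<in>Wd n m. if u' = u then (\<Sum>v'\<in>Wd n m. if v' = v then ?c else 0) else 0)"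
    by (intro sum.cong refl) auto
  also have "\<dots> = ?c"
    using assms by simp
  finally show "tmul n q m (basis_el u) (basis_el v) w = tscale (wcoef q u v) (basis_el (widx n u v)) w"
    by (auto simp: tscale_def basis_el_def)
qed

lemma widx_notWd:
  "u \<in> Wd n m \<Longrightarrow> v \<in> Wd n m \<Longrightarrow> widx n u v \<notin> Wd n m \<Longrightarrow> wcoef q u v = 0"
proof (induction u arbitrary: v m)
  case Nil then show ?case by (auto simp: Wd_def)
next
  case (Cons a u)
  then obtain c v' where v: "v = c # v'" by (cases v) (auto simp: Wd_def)
  obtain i e where a: "a = (i,e)" by (cases a)
  obtain j f where c: "c = (j,f)" by (cases c)
  show ?case
  proof (cases "e + f < 2")
    case True
    then have "widx n u v' \<notin> Wd n (m - 1)" using Cons.prems by (auto simp: v a c)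
    then have "wcoef q u v' = 0" using Cons.prems Cons.IH[of "m - 1" v'] by (auto simp: v)
    then show ?thesis by (simp add: v)
  next
    case False
    then show ?thesis by (simp add: v a c)
  qed
qed

lemma tmul_notWd_left: "s \<notin> Wd n m \<Longrightarrow> tmul n q m (basis_el s) g = tzero"
  by (rule ext) (auto simp: tmul_def tzero_def basis_el_def intro!: sum.neutral)

lemma tmul_notWd_right: "s \<notin> Wd n m \<Longrightarrow> tmul n q m g (basis_el s) = tzero"
  by (rule ext) (auto simp: tmul_def tzero_def basis_el_def intro!: sum.neutral)

lemma tscale_tscale[simp]: "tscale c (tscale d f) = tscale (c * d) (f::'a::semigroup_mult tens)"
  by (simp add: tscale_def fun_eq_iff mult.assoc)

lemma tscale_zero[simp]: "tscale (0::'a::semiring_0) f = tzero"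
  by (simp add: tscale_def tzero_def)

lemma tscale_tzero[simp]: "tscale (c::'a::semiring_0) tzero = tzero"
  by (simp add: tscale_def tzero_def)

lemma tscale_one[simp]: "tscale (1::'a::monoid_mult) f = f"
  by (simp add: tscale_def)

lemma tadd_tzero[simp]: "tadd tzero f = f" "tadd f tzero = (f::'a::monoid_add tens)"
  by (simp_all add: tadd_def tzero_def)

lemma tmul_tscale_left[simp]: "tmul n q m (tscale c f) g = tscale c (tmul n q m f g)"
  by (simp add: tmul_def tscale_def fun_eq_iff sum_distrib_left mult_ac if_distrib cong: if_cong)

lemma tmul_tscale_right[simp]: "tmul n q m f (tscale c g) = tscale c (tmul n q m f g)"
  by (simp add: tmul_def tscale_def fun_eq_iff sum_distrib_left mult_ac if_distrib cong: if_cong)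

lemma tmul_tzero[simp]: "tmul n q m tzero g = tzero" "tmul n q m g tzero = tzero"
  by (rule ext, simp add: tmul_def tzero_def cong: if_cong)+

lemma tmul_tadd_left[simp]: "tmul n q m (tadd f g) h = tadd (tmul n q m f h) (tmul n q m g h)"
  by (simp add: tmul_def tadd_def fun_eq_iff sum.distrib[symmetric] algebra_simps if_distrib cong: if_cong)

lemma tmul_tadd_right[simp]: "tmul n q m h (tadd f g) = tadd (tmul n q m h f) (tmul n q m h g)"
  by (simp add: tmul_def tadd_def fun_eq_iff sum.distrib[symmetric] algebra_simps if_distrib cong: if_cong)

lemma if_sum_pull: "(if P then sum f A else 0) = sum (\<lambda>a. if P then f a else 0) A"
  by simp

lemma tmul_tsum_left: "tmul n q m (tsum F A) g = tsum (\<lambda>a. tmul n q m (F a) g) A"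
proof (rule ext)
  fix w
  have "tmul n q m (tsum F A) g w = (\<Sum>u\<in>Wd n m. \<Sum>v\<in>Wd n m. \<Sum>a\<in>A.
          if widx n u v = w then F a u * g v * wcoef q u v else 0)"
    unfolding tmul_def tsum_def by (simp add: sum_distrib_right if_sum_pull cong: if_cong)
  also have "\<dots> = (\<Sum>u\<in>Wd n m. \<Sum>a\<in>A. \<Sum>v\<in>Wd n m.
          if widx n u v = w then F a u * g v * wcoef q u v else 0)"
    by (rule sum.cong[OF refl], rule sum.swap)
  also have "\<dots> = (\<Sum>a\<in>A. \<Sum>u\<in>Wd n m. \<Sum>v\<in>Wd n m.
          if widx n u v = w then F a u * g v * wcoef q u v else 0)"
    by (rule sum.swap)
  finally show "tmul n q m (tsum F A) g w = tsum (\<lambda>a. tmul n q m (F a) g) A w"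
    unfolding tmul_def tsum_def .
qed

lemma tmul_tsum_right: "tmul n q m g (tsum F A) = tsum (\<lambda>a. tmul n q m g (F a)) A"
proof (rule ext)
  fix w
  have "tmul n q m g (tsum F A) w = (\<Sum>u\<in>Wd n m. \<Sum>v\<in>Wd n m. \<Sum>a\<in>A.
          if widx n u v = w then g u * F a v * wcoef q u v else 0)"
    unfolding tmul_def tsum_def by (simp add: sum_distrib_right sum_distrib_left if_sum_pull cong: if_cong)
  also have "\<dots> = (\<Sum>u\<in>Wd n m. \<Sum>a\<in>A. \<Sum>v\<in>Wd n m.
          if widx n u v = w then g u * F a v * wcoef q u v else 0)"
    by (rule sum.cong[OF refl], rule sum.swap)
  also have "\<dots> = (\<Sum>a\<in>A. \<Sum>u\<in>Wd n m. \<Sum>v\<in>Wd n m.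
          if widx n u v = w then g u * F a v * wcoef q u v else 0)"
    by (rule sum.swap)
  finally show "tmul n q m g (tsum F A) w = tsum (\<lambda>a. tmul n q m g (F a)) A w"
    unfolding tmul_def tsum_def .
qed

lemma power_mod_eq: "(x::'a::monoid_mult) ^ N = 1 \<Longrightarrow> x ^ (k mod N) = x ^ k"
proof -
  assume h: "x ^ N = 1"
  have "x ^ k = x ^ (N * (k div N) + k mod N)" by (simp only: mult_div_mod_eq)
  also have "\<dots> = (x ^ N) ^ (k div N) * x ^ (k mod N)" by (simp only: power_add power_mult)
  finally have "x ^ k = (x ^ N) ^ (k div N) * x ^ (k mod N)" .
  then show ?thesis using h by simp
qed

lemma bcoef_assoc:
  assumes "inverse q ^ (2*n) = 1"
  shows "bcoef q a b * bcoef q (bidx n a b) c = bcoef q b c * bcoef q a (bidx n b c)"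
proof -
  obtain i e where a: "a = (i,e)" by (cases a)
  obtain j f where b: "b = (j,f)" by (cases b)
  obtain k g where c: "c = (k,g)" by (cases c)
  have pm: "inverse q ^ ((j + k) mod (2*n)) = inverse q ^ (j + k)"
    using assms by (rule power_mod_eq)
  have "2 \<le> e + f + g \<or> (e=0\<and>f=0\<and>g=0) \<or> (e=1\<and>f=0\<and>g=0) \<or> (e=0\<and>f=1\<and>g=0) \<or> (e=0\<and>f=0\<and>g=1)"
    by arith
  then show ?thesis
  proof (elim disjE)
    assume "2 \<le> e + f + g" then show ?thesis by (simp add: a b c)
  qed (use pm in \<open>simp_all add: a b c power_add\<close>)
qed

lemma wcoef_assoc:
  assumes "inverse q ^ (2*n) = 1" "length u = length v" "length v = length w"
  shows "wcoef q u v * wcoef q (widx n u v) w = wcoef q v w * wcoef q u (widx n v w)"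
  using assms(2,3)
proof (induction u arbitrary: v w)
  case Nil then show ?case by simp
next
  case (Cons a u)
  then obtain b v' where v: "v = b # v'" by (cases v) auto
  with Cons obtain c w' where w: "w = c # w'" by (cases w) auto
  have IH: "wcoef q u v' * wcoef q (widx n u v') w' = wcoef q v' w' * wcoef q u (widx n v' w')"
    using Cons by (simp add: v w)
  have B: "bcoef q a b * bcoef q (bidx n a b) c = bcoef q b c * bcoef q a (bidx n b c)"
    using assms(1) by (rule bcoef_assoc)
  have "wcoef q (a # u) v * wcoef q (widx n (a # u) v) w =
     (bcoef q a b * bcoef q (bidx n a b) c) * (wcoef q u v' * wcoef q (widx n u v') w')"
    by (simp add: v w mult_ac)
  also have "\<dots> = (bcoef q b c * bcoef q a (bidx n b c)) * (wcoef q v' w' * wcoef q u (widx n v' w'))"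
    by (simp only: B IH)
  also have "\<dots> = wcoef q v w * wcoef q (a # u) (widx n v w)"
    by (simp add: v w mult_ac)
  finally show ?case .
qed

lemma bidx_assoc: "bidx n (bidx n a b) c = bidx n a (bidx n b c)"
  by (cases a; cases b; cases c) (simp add: mod_add_left_eq mod_add_right_eq add.assoc)

lemma widx_assoc:
  "length u = length v \<Longrightarrow> length v = length w \<Longrightarrow> widx n (widx n u v) w = widx n u (widx n v w)"
proof (induction u arbitrary: v w)
  case Nil then show ?case by simp
next
  case (Cons a u)
  then obtain b v' where v: "v = b # v'" by (cases v) auto
  with Cons obtain c w' where w: "w = c # w'" by (cases w) auto
  show ?case using Cons by (simp add: v w bidx_assoc)
qed

lemma length_widx: "length u = length v \<Longrightarrow> length (widx n u v) = length u"
  by (simp add: widx_def)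

lemma tmul_basis_assoc:
  assumes q: "inverse q ^ (2*n) = 1" and u: "u \<in> Wd n m" and v: "v \<in> Wd n m" and w: "w \<in> Wd n m"
  shows "tmul n q m (tmul n q m (basis_el u) (basis_el v)) (basis_el w) =
         tmul n q m (basis_el u) (tmul n q m (basis_el v) (basis_el w))"
proof -
  have len: "length u = m" "length v = m" "length w = m" using u v w by (auto simp: Wd_length)
  have C: "wcoef q u v * wcoef q (widx n u v) w = wcoef q v w * wcoef q u (widx n v w)"
    using q len by (intro wcoef_assoc) auto
  have I: "widx n (widx n u v) w = widx n u (widx n v w)"
    using len by (intro widx_assoc) auto
  have L: "tmul n q m (tmul n q m (basis_el u) (basis_el v)) (basis_el w) =
     tscale (wcoef q u v * wcoef q (widx n u v) w) (basis_el (widx n (widx n u v) w))"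
  proof (cases "widx n u v \<in> Wd n m")
    case True then show ?thesis using u v w by (simp add: tmul_basis)
  next
    case False
    then have "wcoef q u v = 0" using u v by (rule widx_notWd[rotated 2])
    then show ?thesis using u v by (simp add: tmul_basis)
  qed
  have R: "tmul n q m (basis_el u) (tmul n q m (basis_el v) (basis_el w)) =
     tscale (wcoef q v w * wcoef q u (widx n v w)) (basis_el (widx n u (widx n v w)))"
  proof (cases "widx n v w \<in> Wd n m")
    case True then show ?thesis using u v w by (simp add: tmul_basis mult.commute)
  next
    case False
    then have "wcoef q v w = 0" using v w by (rule widx_notWd[rotated 2])
    then show ?thesis using v w by (simp add: tmul_basis)
  qed
  show ?thesis using L R C I by simp
qed

lemma tsum_swap: "tsum (\<lambda>a. tsum (\<lambda>b. F a b) B) A = tsum (\<lambda>b. tsum (\<lambda>a. F a b) A) B"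
  unfolding tsum_def by (rule ext) (rule sum.swap)

lemma tscale_tsum: "tscale (c::'a::semiring_0) (tsum F A) = tsum (\<lambda>a. tscale c (F a)) A"
  unfolding tsum_def tscale_def by (rule ext) (simp add: sum_distrib_left)

lemma tsum_cong: "(\<And>a. a \<in> A \<Longrightarrow> F a = G a) \<Longrightarrow> tsum F A = tsum G A"
  unfolding tsum_def by (rule ext) (rule sum.cong, auto)

lemma tmul_restrict_right:
  "tmul n q m f g = tmul n q m f (tsum (\<lambda>v. tscale (g v) (basis_el v)) (Wd n m))"
  unfolding tmul_def tsum_def tscale_def basis_el_def
  by (rule ext) (intro sum.cong refl, simp add: if_distrib[of "\<lambda>x. _ * x"] cong: if_cong)

lemma tmul_restrict_left:
  "tmul n q m f g = tmul n q m (tsum (\<lambda>v. tscale (f v) (basis_el v)) (Wd n m)) g"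
  unfolding tmul_def tsum_def tscale_def basis_el_def
  by (rule ext) (intro sum.cong refl, simp add: if_distrib[of "\<lambda>x. _ * x"] cong: if_cong)

lemma tmul_expand_right:
  "tmul n q m f g = tsum (\<lambda>v. tscale (g v) (tmul n q m f (basis_el v))) (Wd n m)"
  by (subst tmul_restrict_right) (simp add: tmul_tsum_right)

lemma tmul_expand_left:
  "tmul n q m f g = tsum (\<lambda>v. tscale (f v) (tmul n q m (basis_el v) g)) (Wd n m)"
  by (subst tmul_restrict_left) (simp add: tmul_tsum_left)

lemma tmul_assoc:
  assumes q: "inverse q ^ (2*n) = 1"
  shows "tmul n q m (tmul n q m f g) h = tmul n q m f (tmul n q m g h)"
proof -
  let ?W = "Wd n m"
  let ?b = "basis_el :: (nat \<times> nat) list \<Rightarrow> _ tens"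
  let ?T = "\<lambda>u v w. tmul n q m (tmul n q m (?b u) (?b v)) (?b w)"
  have E1: "\<And>X. tmul n q m X h = tsum (\<lambda>w. tscale (h w) (tmul n q m X (?b w))) ?W"
    by (rule tmul_expand_right)
  have E2: "tmul n q m f g = tsum (\<lambda>u. tscale (f u) (tmul n q m (?b u) g)) ?W"
    by (rule tmul_expand_left)
  have E3: "\<And>u. tmul n q m (?b u) g = tsum (\<lambda>v. tscale (g v) (tmul n q m (?b u) (?b v))) ?W"
    by (rule tmul_expand_right)
  have F1: "\<And>X. tmul n q m f X = tsum (\<lambda>u. tscale (f u) (tmul n q m (?b u) X)) ?W"
    by (rule tmul_expand_left)
  have F2: "tmul n q m g h = tsum (\<lambda>v. tscale (g v) (tmul n q m (?b v) h)) ?W"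
    by (rule tmul_expand_left)
  have F3: "\<And>v. tmul n q m (?b v) h = tsum (\<lambda>w. tscale (h w) (tmul n q m (?b v) (?b w))) ?W"
    by (rule tmul_expand_right)
  have L: "tmul n q m (tmul n q m f g) h =
     tsum (\<lambda>u. tscale (f u) (tsum (\<lambda>v. tscale (g v) (tsum (\<lambda>w. tscale (h w) (?T u v w)) ?W)) ?W)) ?W"
    by (simp only: E1 E2 E3 tmul_tsum_left tmul_tscale_left)
  have R: "tmul n q m f (tmul n q m g h) =
     tsum (\<lambda>v. tscale (g v) (tsum (\<lambda>w. tscale (h w) (tsum (\<lambda>u. tscale (f u)
        (tmul n q m (?b u) (tmul n q m (?b v) (?b w)))) ?W)) ?W)) ?W"
    by (simp only: F1 F2 F3 tmul_tsum_right tmul_tscale_right)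
  also have "\<dots> = tsum (\<lambda>v. tscale (g v) (tsum (\<lambda>w. tscale (h w) (tsum (\<lambda>u. tscale (f u)
        (?T u v w)) ?W)) ?W)) ?W"
    using q by (intro tsum_cong arg_cong[where f="tscale _"]) (simp add: tmul_basis_assoc)
  finally have R: "tmul n q m f (tmul n q m g h) = \<dots>" .
  show ?thesis
  proof (rule ext)
    fix x
    have XL: "tmul n q m (tmul n q m f g) h x = (\<Sum>u\<in>?W. \<Sum>v\<in>?W. \<Sum>w\<in>?W. f u * (g v * (h w * ?T u v w x)))"
      unfolding L tsum_def tscale_def by (simp add: sum_distrib_left)
    have XR: "tmul n q m f (tmul n q m g h) x = (\<Sum>v\<in>?W. \<Sum>w\<in>?W. \<Sum>u\<in>?W. g v * (h w * (f u * ?T u v w x)))"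
      unfolding R tsum_def tscale_def by (simp add: sum_distrib_left)
    have "(\<Sum>v\<in>?W. \<Sum>w\<in>?W. \<Sum>u\<in>?W. g v * (h w * (f u * ?T u v w x))) =
          (\<Sum>v\<in>?W. \<Sum>u\<in>?W. \<Sum>w\<in>?W. g v * (h w * (f u * ?T u v w x)))"
      by (rule sum.cong[OF refl], rule sum.swap)
    also have "\<dots> = (\<Sum>u\<in>?W. \<Sum>v\<in>?W. \<Sum>w\<in>?W. g v * (h w * (f u * ?T u v w x)))"
      by (rule sum.swap)
    also have "\<dots> = (\<Sum>u\<in>?W. \<Sum>v\<in>?W. \<Sum>w\<in>?W. f u * (g v * (h w * ?T u v w x)))"
      by (simp add: mult_ac)
    finally show "tmul n q m (tmul n q m f g) h x = tmul n q m f (tmul n q m g h) x"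
      using XL XR by simp
  qed
qed

lemma tone_Wd: "n \<ge> 1 \<Longrightarrow> replicate m (0,0) \<in> Wd n m"
  by (auto simp: Wd_def)

lemma widx_one: "w \<in> Wd n m \<Longrightarrow> widx n (replicate m (0,0)) w = w"
  by (induction w arbitrary: m) (auto simp: Wd_def widx_def map2_map_map)


lemma wcoef_one_left: "w \<in> Wd n m \<Longrightarrow> wcoef q (replicate m (0,0)) w = 1"
  by (induction w arbitrary: m) (auto simp: Wd_def bcoef_def)

lemma tone_left:
  assumes "n \<ge> 1" "supported n m f"
  shows "tmul n q m (tone m) f = f"
proof -
  have "tmul n q m (tone m) f = tsum (\<lambda>v. tscale (f v) (tmul n q m (tone m) (basis_el v))) (Wd n m)"
    by (rule tmul_expand_right)
  also have "\<dots> = tsum (\<lambda>v. tscale (f v) (basis_el v)) (Wd n m)"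
    using assms(1) by (intro tsum_cong) (simp add: tone_def tmul_basis tone_Wd widx_one wcoef_one_left)
  also have "\<dots> = f"
  proof (rule ext)
    fix x
    show "tsum (\<lambda>v. tscale (f v) (basis_el v)) (Wd n m) x = f x"
      using assms(2) by (auto simp: tsum_def tscale_def basis_el_def supported_def if_distrib cong: if_cong)
  qed
  finally show ?thesis .
qed

lemma wcoef_one_right: "w \<in> Wd n m \<Longrightarrow> wcoef q w (replicate m (0,0)) = 1"
  by (induction w arbitrary: m) (auto simp: Wd_def bcoef_def)

lemma widx_one_right: "w \<in> Wd n m \<Longrightarrow> widx n w (replicate m (0,0)) = w"
  by (induction w arbitrary: m) (auto simp: Wd_def widx_def)

lemma supported_expand: "supported n m (f::'a::semiring_1 tens) \<Longrightarrow> tsum (\<lambda>v. tscale (f v) (basis_el v)) (Wd n m) = f"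
proof (rule ext)
  fix x assume s: "supported n m (f::'a::semiring_1 tens)"
  have "tsum (\<lambda>v. tscale (f v) (basis_el v)) (Wd n m) x = (\<Sum>v\<in>Wd n m. if v = x then f v else 0)"
    unfolding tsum_def tscale_def basis_el_def by (intro sum.cong refl) auto
  also have "\<dots> = f x" using s by (simp add: sum.delta' supported_def)
  finally show "tsum (\<lambda>v. tscale (f v) (basis_el v)) (Wd n m) x = f x" .
qed

lemma tone_right:
  assumes "n \<ge> 1" "supported n m f"
  shows "tmul n q m f (tone m) = f"
proof -
  have "tmul n q m f (tone m) = tsum (\<lambda>v. tscale (f v) (tmul n q m (basis_el v) (tone m))) (Wd n m)"
    by (rule tmul_expand_left)
  also have "\<dots> = tsum (\<lambda>v. tscale (f v) (basis_el v)) (Wd n m)"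
    using assms(1) by (intro tsum_cong) (simp add: tone_def tmul_basis tone_Wd widx_one_right wcoef_one_right)
  also have "\<dots> = f" using assms(2) by (rule supported_expand)
  finally show ?thesis .
qed

lemma supported_tmul: "supported n m (tmul n q m f g)"
  unfolding supported_def tmul_def
  by (auto intro!: sum.neutral dest: widx_notWd[where q=q])

lemma supported_basis: "u \<in> Wd n m \<Longrightarrow> supported n m (basis_el u)"
  by (auto simp: supported_def basis_el_def)

lemma supported_tadd: "supported n m f \<Longrightarrow> supported n m g \<Longrightarrow> supported n m (tadd f (g::'a::monoid_add tens))"
  by (auto simp: supported_def tadd_def)

lemma supported_tscale: "supported n m f \<Longrightarrow> supported n m (tscale (c::'a::mult_zero) f)"
  by (auto simp: supported_def tscale_def)

lemma supported_tzero: "supported n m tzero"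
  by (auto simp: supported_def tzero_def)

lemma supported_tsum: "(\<And>a. a \<in> A \<Longrightarrow> supported n m (F a)) \<Longrightarrow> supported n m (tsum F A)"
  by (auto simp: supported_def tsum_def intro!: sum.neutral)

lemma ttensor_basis:
  "length u = m1 \<Longrightarrow> length v = m2 \<Longrightarrow> ttensor m1 m2 (basis_el u) (basis_el v) = (basis_el (u @ v) :: 'a::semiring_1 tens)"
proof (rule ext)
  fix w assume l: "length u = m1" "length v = m2"
  show "ttensor m1 m2 (basis_el u) (basis_el v) w = (basis_el (u @ v) :: 'a::semiring_1 tens) w"
  proof (cases "w = u @ v")
    case True then show ?thesis using l by (simp add: ttensor_def basis_el_def)
  next
    case False
    then have "\<not> (take m1 w = u \<and> drop m1 w = v)" using l by (metis append_take_drop_id)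
    then show ?thesis using False by (auto simp add: ttensor_def basis_el_def)
  qed
qed

lemma ttensor_tadd_left[simp]: "ttensor m1 m2 (tadd f g) h = tadd (ttensor m1 m2 f h) (ttensor m1 m2 g (h::'a::semiring_0 tens))"
  unfolding ttensor_def tadd_def by (rule ext) (simp add: distrib_right)
lemma ttensor_tadd_right[simp]: "ttensor m1 m2 h (tadd f g) = tadd (ttensor m1 m2 h f) (ttensor m1 m2 h (g::'a::semiring_0 tens))"
  unfolding ttensor_def tadd_def by (rule ext) (simp add: distrib_left)
lemma ttensor_tscale_left[simp]: "ttensor m1 m2 (tscale c f) h = tscale c (ttensor m1 m2 f (h::'a::comm_semiring_0 tens))"
  unfolding ttensor_def tscale_def by (rule ext) (simp add: mult.assoc)
lemma ttensor_tscale_right[simp]: "ttensor m1 m2 h (tscale c f) = tscale c (ttensor m1 m2 h (f::'a::comm_semiring_0 tens))"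
  unfolding ttensor_def tscale_def by (rule ext) (simp add: mult.left_commute)
lemma ttensor_tsum_left: "ttensor m1 m2 (tsum F A) (h::'a::comm_semiring_0 tens) = tsum (\<lambda>a. ttensor m1 m2 (F a) h) A"
  unfolding ttensor_def tsum_def by (rule ext) (simp add: sum_distrib_right)
lemma ttensor_tsum_right: "ttensor m1 m2 (h::'a::comm_semiring_0 tens) (tsum F A) = tsum (\<lambda>a. ttensor m1 m2 h (F a)) A"
  unfolding ttensor_def tsum_def by (rule ext) (simp add: sum_distrib_left)
lemma ttensor_tzero[simp]: "ttensor m1 m2 tzero (h::'a::mult_zero tens) = tzero" "ttensor m1 m2 h (tzero::'a tens) = tzero"
  unfolding ttensor_def tzero_def by auto

lemma flip2_tadd[simp]: "flip2 (tadd f g) = tadd (flip2 f) (flip2 g)"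
  by (simp add: flip2_def tadd_def)
lemma flip2_tscale[simp]: "flip2 (tscale c f) = tscale c (flip2 f)"
  by (simp add: flip2_def tscale_def)
lemma flip2_tsum: "flip2 (tsum F A) = tsum (\<lambda>a. flip2 (F a)) A"
  by (simp add: flip2_def tsum_def)
lemma flip2_basis[simp]: "flip2 (basis_el [x, y]) = basis_el [y, x]"
  by (rule ext) (simp add: flip2_def basis_el_def rev_swap)
lemma flip2_tzero[simp]: "flip2 tzero = tzero"
  by (simp add: flip2_def tzero_def)

lemma linext_alt: "linext n m D f = tsum (\<lambda>u. tscale (f u) (D u)) (Wd n m)"
  by (simp add: linext_def tsum_def tscale_def)

lemma linext_tadd[simp]: "linext n m D (tadd f g) = tadd (linext n m D f) (linext n m D g)"
  by (rule ext) (simp add: linext_def tadd_def algebra_simps sum.distrib)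
lemma linext_tscale[simp]: "linext n m D (tscale c f) = tscale c (linext n m D f)"
  by (rule ext) (simp add: linext_def tscale_def sum_distrib_left mult.assoc)
lemma linext_basis: "u \<in> Wd n m \<Longrightarrow> linext n m D (basis_el u) = D u"
proof (rule ext)
  fix x assume u: "u \<in> Wd n m"
  have "linext n m D (basis_el u) x = (\<Sum>v\<in>Wd n m. if v = u then D v x else 0)"
    unfolding linext_def basis_el_def by (intro sum.cong refl) auto
  also have "\<dots> = D u x" using u by (simp add: sum.delta')
  finally show "linext n m D (basis_el u) x = D u x" .
qed
lemma linext_tzero[simp]: "linext n m D tzero = tzero"
  by (rule ext) (simp add: linext_def tzero_def)

lemma R13_tadd[simp]: "R13 (tadd f g) = tadd (R13 f) (R13 (g::'a::semiring_1 tens))"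
  by (rule ext) (simp add: R13_def tadd_def algebra_simps)
lemma R13_tscale[simp]: "R13 (tscale c f) = tscale c (R13 (f::'a::semiring_1 tens))"
  by (rule ext) (simp add: R13_def tscale_def algebra_simps)
lemma len3: "length w = 3 \<Longrightarrow> \<exists>a b c. w = [a,b,c]"
  by (auto simp: numeral_3_eq_3 length_Suc_conv)

lemma R13_basis: "R13 (basis_el [x, y]) = (basis_el [x, (0,0), y] :: 'a::semiring_1 tens)"
proof (rule ext)
  fix w
  show "R13 (basis_el [x, y]) w = (basis_el [x, (0,0), y] :: 'a::semiring_1 tens) w"
  proof (cases "length w = 3")
    case True
    then obtain a b c where "w = [a,b,c]" using len3 by blast
    then show ?thesis by (simp add: R13_def basis_el_def tone_def)
  next
    case False
    then show ?thesis by (auto simp: R13_def basis_el_def)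
  qed
qed

lemma R12_eq: "R12 R = ttensor 2 1 R (basis_el [(0,0)])"
  by (simp add: R12_def tone_def)
lemma R23_eq: "R23 R = ttensor 1 2 (basis_el [(0,0)]) R"
  by (simp add: R23_def tone_def)


locale H4 =
  fixes n :: nat and q :: "'k::field_char_0" and a :: 'k
  assumes n1: "1 \<le> n" and qN: "q ^ (2*n) = 1" and qprim: "\<And>k. 0 < k \<Longrightarrow> k < 2*n \<Longrightarrow> q ^ k \<noteq> 1"
begin

lemma q_nz: "q \<noteq> 0"
proof
  assume "q = 0" then have "q ^ (2*n) = 0" using n1 by simp
  then show False using qN by simp
qed

lemma qn: "q ^ n = -1"
proof -
  have "(q ^ n - 1) * (q ^ n + 1) = 0"
    using qN by (simp add: algebra_simps power_mult[symmetric] mult.commute power2_eq_square[symmetric])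
  moreover have "q ^ n \<noteq> 1" using qprim[of n] n1 by simp
  ultimately show ?thesis by (simp add: eq_neg_iff_add_eq_0)
qed

abbreviation "p \<equiv> inverse q"

lemma pN[simp]: "p ^ (2*n) = 1" using qN by (simp add: power_inverse)
lemma pn[simp]: "p ^ n = -1" using qn by (simp add: power_inverse)
lemma p_nz[simp]: "p \<noteq> 0" using q_nz by simp

lemma N_pos[simp]: "0 < 2*n" using n1 by simp
lemma n_lt[simp]: "n < 2*n" using n1 by simp
lemma one_mod[simp]: "1 mod (2*n) = 1" using n1 by simp
lemma n_mod[simp]: "n mod (2*n) = n" using n1 by simp
lemma nn_mod[simp]: "(n + n) mod (2*n) = 0" by (metis mult_2 mod_self)
lemma mod_lt[simp]: "i mod (2*n) < 2*n" using N_pos by (rule mod_less_divisor)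
lemma one_lt[simp]: "Suc 0 < 2*n" using n1 by simp
lemma n_pos[simp]: "0 < n" using n1 by simp
lemma n_nz[simp]: "n \<noteq> 0" using n1 by simp

lemma modS: "Suc (k + i mod m) mod m = Suc (k + i) mod m"
  by (metis add_Suc mod_add_right_eq)

lemmas bsimp = mod_Suc_eq tmul_basis Hmul_def H2mul_def H3mul_def mod_add_eq mod_add_left_eq mod_add_right_eq

lemma zpow_eq: "zpow n q i = basis_el [(i mod (2*n), 0)]"
proof (induction i)
  case 0 then show ?case by (simp add: zpow_def tone_def)
next
  case (Suc i)
  have "zpow n q (Suc i) = tmul n q 1 (zpow n q i) (zgen n)" by (simp add: zpow_def)
  also have "\<dots> = basis_el [(Suc i mod (2*n), 0)]"
    by (simp add: Suc zgen_def bsimp)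
  finally show ?case .
qed

lemma tone1: "tone 1 = basis_el [(0,0)]" by (simp add: tone_def)
lemma tone2: "tone 2 = basis_el [(0,0),(0,0)]" by (simp add: tone_def numeral_2_eq_2)
lemma tone3: "tone 3 = basis_el [(0,0),(0,0),(0,0)]" by (simp add: tone_def numeral_3_eq_3)

lemma zgen_eq: "zgen n = basis_el [(1, 0)]" by (simp add: zgen_def)

lemma Hx: "k < 2*n \<Longrightarrow> Hmul n q (basis_el [(k, 0)]) xgen = basis_el [(k, 1)]"
  by (simp add: xgen_def bsimp)

lemma Delta_z_eq: "Delta_z n q a = tadd (basis_el [(1,0),(1,0)])
   (tscale (a * (1 - p^2)) (basis_el [((n+1) mod (2*n),1),(1,1)]))"
  unfolding Delta_z_def zpow_eq zgen_eq
  by (simp add: Hx ttensor_basis)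


lemma tpow_Dz: "tpow n q 2 (Delta_z n q a) i = tadd (basis_el [(i mod (2*n),0),(i mod (2*n),0)])
   (tscale (a * (1 - p^(2*i))) (basis_el [((n+i) mod (2*n),1),(i mod (2*n),1)]))"
proof (induction i)
  case 0 then show ?case by (simp add: tone2)
next
  case (Suc i)
  have "tpow n q 2 (Delta_z n q a) (Suc i) = tmul n q 2 (tpow n q 2 (Delta_z n q a) i) (Delta_z n q a)"
    by simp
  also have "\<dots> = tmul n q 2 (tadd (basis_el [(i mod (2*n),0),(i mod (2*n),0)])
   (tscale (a * (1 - p^(2*i))) (basis_el [((n+i) mod (2*n),1),(i mod (2*n),1)])))
   (tadd (basis_el [(1,0),(1,0)])
   (tscale (a * (1 - p^2)) (basis_el [((n+1) mod (2*n),1),(1,1)])))"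
    by (subst Suc.IH) (simp only: Delta_z_eq)
  also have "\<dots> = tadd (basis_el [(Suc i mod (2*n),0),(Suc i mod (2*n),0)])
   (tscale (a * (1 - p^(2*Suc i))) (basis_el [((n+Suc i) mod (2*n),1),(Suc i mod (2*n),1)]))"
    apply (simp add: bsimp add_ac modS)
    apply (rule ext)
    apply (simp add: tadd_def tscale_def algebra_simps power2_eq_square)
    done
  finally show ?case .
qed


lemma Delta_x_eq: "Delta_x n q = tadd (basis_el [(0,1),(0,0)]) (basis_el [(n,0),(0,1)])"
  unfolding Delta_x_def zpow_eq tone1 xgen_def by (simp add: ttensor_basis)

lemma Db0: "i < 2*n \<Longrightarrow> Delta_basis n q a [(i,0)] = tadd (basis_el [(i,0),(i,0)])
   (tscale (a * (1 - p^(2*i))) (basis_el [((n+i) mod (2*n),1),(i,1)]))"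
  unfolding Delta_basis_def by (simp add: tpow_Dz tone2 bsimp)

lemma Db1: "i < 2*n \<Longrightarrow> Delta_basis n q a [(i,1)] = tadd (basis_el [(i,1),(i,0)])
   (basis_el [((n+i) mod (2*n),0),(i,1)])"
  unfolding Delta_basis_def by (simp add: tpow_Dz tone2 Delta_x_eq bsimp add_ac)

lemma Delta_basis_el: "u \<in> Wd n 1 \<Longrightarrow> Delta n q a (basis_el u) = Delta_basis n q a u"
  unfolding Delta_def by (rule linext_basis)

end

context H4 begin

definition "Rx = tadd (tscale (1/2) (basis_el [(0,0),(0,0)]))
  (tadd (tscale (1/2) (basis_el [(0,0),(n,0)]))
  (tadd (tscale (1/2) (basis_el [(n,0),(0,0)]))
  (tadd (tscale (-1/2) (basis_el [(n,0),(n,0)]))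
  (tadd (tscale a (basis_el [(0,1),(0,1)]))
  (tadd (tscale a (basis_el [(n,1),(0,1)]))
  (tadd (tscale (-a) (basis_el [(0,1),(n,1)]))
  (tscale a (basis_el [(n,1),(n,1)]))))))))"

definition "Rix = tadd (tscale (1/2) (basis_el [(0,0),(0,0)]))
  (tadd (tscale (1/2) (basis_el [(0,0),(n,0)]))
  (tadd (tscale (1/2) (basis_el [(n,0),(0,0)]))
  (tadd (tscale (-1/2) (basis_el [(n,0),(n,0)]))
  (tadd (tscale a (basis_el [(0,1),(0,1)]))
  (tadd (tscale a (basis_el [(0,1),(n,1)]))
  (tadd (tscale (-a) (basis_el [(n,1),(0,1)]))
  (tscale a (basis_el [(n,1),(n,1)]))))))))"

lemma pw: "tadd f g x = f x + g x" "tscale c f x = c * f x" "basis_el u x = (if x = u then 1 else 0)"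
  "tzero x = 0"
  by (simp_all add: tadd_def tscale_def basis_el_def tzero_def)

lemma nn_mod'[simp]: "(n + n) mod (2 * n) = 0" by simp

lemma R_Ri: "tmul n q 2 Rx Rix = tone 2"
  unfolding Rx_def Rix_def tone2
  apply (simp add: bsimp)
  apply (rule ext)
  apply (simp add: pw split: if_split)
  done


lemma Ri_R: "tmul n q 2 Rix Rx = tone 2"
  unfolding Rx_def Rix_def tone2
  apply (simp add: bsimp)
  apply (rule ext)
  apply (simp add: pw split: if_split)
  done

lemma Db1': "i < 2*n \<Longrightarrow> Delta_basis n q a [(i,Suc 0)] = tadd (basis_el [(i,1),(i,0)])
   (basis_el [((n+i) mod (2*n),0),(i,1)])"
  using Db1 by simp

lemmas Dsimp = Delta_basis_el Db0 Db1 Db1' linext_basis ttensor_basis R13_basis R12_eq R23_eq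

lemma DidR: "Delta_id n q a Rx = H3mul n q (R13 Rx) (R23 Rx)"
  unfolding Rx_def Delta_id_def
  apply (simp add: bsimp Dsimp)
  apply (rule ext)
  apply (simp add: pw split: if_split)
  done

lemma idDR: "id_Delta n q a Rx = H3mul n q (R13 Rx) (R12 Rx)"
  unfolding Rx_def id_Delta_def
  apply (simp add: bsimp Dsimp)
  apply (rule ext)
  apply (simp add: pw split: if_split)
  done

end
context H4 begin

lemma geo: "(r::'k) ^ m = 1 \<Longrightarrow> (\<Sum>t<m. r^t) = (if r = 1 then of_nat m else 0)"
  by (simp add: sum_gp_strict)

lemma p_eq1: "k < 2*n \<Longrightarrow> p ^ k = 1 \<longleftrightarrow> k = 0"
proof
  assume k: "k < 2*n" and "p ^ k = 1"
  then have "q ^ k = 1" by (simp add: power_inverse)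
  then show "k = 0" using qprim[of k] k by (cases "k = 0") auto
qed simp

lemma p_eqm1: "k < 2*n \<Longrightarrow> p ^ k = -1 \<longleftrightarrow> k = n"
proof
  assume k: "k < 2*n" and pk: "p ^ k = -1"
  show "k = n"
  proof (rule ccontr)
    assume kn: "k \<noteq> n"
    show False
    proof (cases "k < n")
      case True
      have "p ^ (k + n) = 1" using pk by (simp add: power_add)
      then have "k + n = 0" using True p_eq1[of "k+n"] by simp
      then show False using n1 by simp
    next
      case False
      then have kk: "k = (k - n) + n" by simp
      have "p ^ (k - n) * (-1) = -1" using pk by (subst (asm) kk) (simp add: power_add)
      then have "p ^ (k - n) = 1" by simp
      then have "k - n = 0" using k p_eq1[of "k-n"] by simp
      then show False using False kn by simp
    qed
  qed
qed simp

lemma p2_eq1: "x < 2*n \<Longrightarrow> p ^ (2*x) = 1 \<longleftrightarrow> x = 0 \<or> x = n"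
proof
  assume x: "x < 2*n" and h: "p ^ (2*x) = 1"
  have "(p ^ x - 1) * (p ^ x + 1) = 0" using h by (simp add: algebra_simps power_mult[symmetric] mult.commute power2_eq_square[symmetric])
  then have "p ^ x = 1 \<or> p ^ x = -1" by (simp add: eq_neg_iff_add_eq_0)
  then show "x = 0 \<or> x = n" using p_eq1[OF x] p_eqm1[OF x] by blast
next
  assume "x = 0 \<or> x = n" then show "p ^ (2*x) = 1"
    using pN by (auto simp: mult.commute)
qed

lemma split_eo: "(\<Sum>s<2*(m::nat). f s) = (\<Sum>r<m. f (2*r)) + (\<Sum>r<m. (f (2*r+1)::'k))"
  by (induction m) (simp_all add: algebra_simps)

lemma inner:
  assumes y: "y < 2*n"
  shows "(\<Sum>t<2*n. (-1)^(s*t) * p^(y*t)) = (if p^y = (-1)^s then of_nat (2*n) else (0::'k))"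
proof -
  let ?r = "(-1)^s * p^y :: 'k"
  have "(\<Sum>t<2*n. (-1)^(s*t) * p^(y*t)) = (\<Sum>t<2*n. ?r ^ t)"
    by (simp add: power_mult power_mult_distrib)
  also have "?r ^ (2*n) = 1"
  proof -
    have A: "((-1::'k)^s)^(2*n) = 1"
    proof -
      have "((-1::'k)^s)^(2*n) = ((-1)^(2*n))^s" by (simp only: power_mult[symmetric] mult.commute)
      then show ?thesis by simp
    qed
    have B: "(p^y)^(2*n) = 1"
    proof -
      have "(p^y)^(2*n) = (p^(2*n))^y" by (simp only: power_mult[symmetric] mult.commute)
      then show ?thesis by simp
    qed
    show ?thesis using A B by (simp add: power_mult_distrib)
  qed
  then have "(\<Sum>t<2*n. ?r ^ t) = (if ?r = 1 then of_nat (2*n) else 0)" by (rule geo)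
  also have "(?r = 1) = (p^y = (-1)^s)"
  proof -
    have s2: "((-1::'k)^s) * (-1)^s = 1" by (simp add: power_add[symmetric] mult_2[symmetric] power_mult)
    show ?thesis
    proof
      assume "?r = 1" then have "(-1)^s * ?r = (-1)^s" by simp
      then show "p^y = (-1)^s" using s2 by (simp add: mult.assoc[symmetric])
    next
      assume "p^y = (-1)^s" then show "?r = 1" using s2 by simp
    qed
  qed
  finally show ?thesis .
qed


lemma geo2: "(\<Sum>r<n. (p ^ (2*x)) ^ r) = (if x = 0 \<or> x = n then of_nat n else 0)" if x: "x < 2*n"
proof -
  have "(p ^ (2*x)) ^ n = 1"
  proof -
    have "(p ^ (2*x)) ^ n = (p ^ (2*n)) ^ x" by (simp only: power_mult[symmetric] mult_ac)
    then show ?thesis by simp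
  qed
  then show ?thesis using p2_eq1[OF x] by (simp add: geo)
qed

lemma mone_ne: "(1::'k) \<noteq> -1" by simp

lemma pe: "p^(x*(2*r)) = (p^(2*x))^r" by (simp add: power_mult[symmetric] mult_ac)
lemma po: "p^(x*(2*r+1)) = p^x * (p^(2*x))^r" by (simp add: power_add power_mult[symmetric] mult_ac)
lemma po': "p^(x + x*(2*r)) = p^x * (p^(2*x))^r" by (simp add: power_add power_mult[symmetric] mult_ac)
lemma m1e: "(-1::'k)^(2*r) = 1" by simp
lemma m1o: "(-1::'k)^(2*r+1) = -1" by simp

lemma Hsum:
  assumes x: "x < 2*n" and y: "y < 2*n"
  shows "(\<Sum>s<2*n. if p^y = (-1)^s then p^(x*s) else 0) =
    (if y = 0 then (if x = 0 \<or> x = n then of_nat n else 0)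
     else if y = n then (if x = 0 then of_nat n else if x = n then - of_nat n else 0) else 0)"
proof -
  have "(\<Sum>s<2*n. if p^y = (-1)^s then p^(x*s) else 0) =
     (\<Sum>r<n. if p^y = 1 then (p^(2*x))^r else 0) + (\<Sum>r<n. if p^y = -1 then p^x * (p^(2*x))^r else 0)"
    by (subst split_eo) (simp add: pe po po' m1e m1o cong: if_cong)
  also have "\<dots> = (if p^y = 1 then (\<Sum>r<n. (p^(2*x))^r) else 0) + (if p^y = -1 then p^x * (\<Sum>r<n. (p^(2*x))^r) else 0)"
    by (simp add: sum_distrib_left)
  also have "\<dots> = (if y = 0 then (if x = 0 \<or> x = n then of_nat n else 0)
     else if y = n then (if x = 0 then of_nat n else if x = n then - of_nat n else 0) else 0)"
    using x y n1 by (auto simp: geo2 p_eq1 p_eqm1)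
  finally show ?thesis .
qed

lemma Hsum2:
  assumes x: "x < 2*n" and y: "y < 2*n"
  shows "(\<Sum>s<2*n. if p^y = (-1)^s then (-1)^s * p^(x*s) else 0) =
    (if y = 0 then (if x = 0 \<or> x = n then of_nat n else 0)
     else if y = n then (if x = 0 then - of_nat n else if x = n then of_nat n else 0) else 0)"
proof -
  have "(\<Sum>s<2*n. if p^y = (-1)^s then (-1)^s * p^(x*s) else 0) =
     (\<Sum>r<n. if p^y = 1 then (p^(2*x))^r else 0) + (\<Sum>r<n. if p^y = -1 then - (p^x * (p^(2*x))^r) else 0)"
    by (subst split_eo) (simp add: pe po po' m1e m1o cong: if_cong)
  also have "\<dots> = (if p^y = 1 then (\<Sum>r<n. (p^(2*x))^r) else 0) + (if p^y = -1 then - (p^x * (\<Sum>r<n. (p^(2*x))^r)) else 0)"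
    by (simp add: sum_distrib_left sum_negf)
  also have "\<dots> = (if y = 0 then (if x = 0 \<or> x = n then of_nat n else 0)
     else if y = n then (if x = 0 then - of_nat n else if x = n then of_nat n else 0) else 0)"
    using x y n1 by (auto simp: geo2 p_eq1 p_eqm1)
  finally show ?thesis .
qed


lemma G1:
  assumes x: "x < 2*n" and y: "y < 2*n"
  shows "(\<Sum>s<2*n. \<Sum>t<2*n. (-1)^(s*t) * (p^(x*s) * p^(y*t))) = of_nat (2*n) *
    (if y = 0 then (if x = 0 \<or> x = n then of_nat n else 0)
     else if y = n then (if x = 0 then of_nat n else if x = n then - of_nat n else 0) else 0)"
proof -
  have "(\<Sum>s<2*n. \<Sum>t<2*n. (-1)^(s*t) * (p^(x*s) * p^(y*t))) =
        (\<Sum>s<2*n. p^(x*s) * (\<Sum>t<2*n. (-1)^(s*t) * p^(y*t)))"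
    by (simp add: sum_distrib_left mult_ac)
  also have "\<dots> = (\<Sum>s<2*n. of_nat (2*n) * (if p^y = (-1)^s then p^(x*s) else 0))"
    using y by (intro sum.cong refl) (simp add: inner)
  also have "\<dots> = of_nat (2*n) * (\<Sum>s<2*n. if p^y = (-1)^s then p^(x*s) else 0)"
    by (simp add: sum_distrib_left)
  finally show ?thesis using Hsum[OF x y] by simp
qed

lemma G2:
  assumes x: "x < 2*n" and y: "y < 2*n"
  shows "(\<Sum>s<2*n. \<Sum>t<2*n. (-1)^(s*(t+1)) * (p^(x*s) * p^(y*t))) = of_nat (2*n) *
    (if y = 0 then (if x = 0 \<or> x = n then of_nat n else 0)
     else if y = n then (if x = 0 then - of_nat n else if x = n then of_nat n else 0) else 0)"
proof -
  have "(\<Sum>s<2*n. \<Sum>t<2*n. (-1)^(s*(t+1)) * (p^(x*s) * p^(y*t))) =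
        (\<Sum>s<2*n. (-1)^s * p^(x*s) * (\<Sum>t<2*n. (-1)^(s*t) * p^(y*t)))"
    by (simp add: sum_distrib_left mult_ac power_add)
  also have "\<dots> = (\<Sum>s<2*n. of_nat (2*n) * (if p^y = (-1)^s then (-1)^s * p^(x*s) else 0))"
    using y by (intro sum.cong refl) (simp add: inner)
  also have "\<dots> = of_nat (2*n) * (\<Sum>s<2*n. if p^y = (-1)^s then (-1)^s * p^(x*s) else 0)"
    by (simp add: sum_distrib_left)
  finally show ?thesis using Hsum2[OF x y] by simp
qed

end
context H4 begin
lemma pw_eval: "tadd f g x = f x + g x" "tscale c f x = c * f x" "basis_el u x = (if x = u then 1 else 0)"
  by (simp_all add: tadd_def tscale_def basis_el_def)

lemma len2: "length w = 2 \<Longrightarrow> \<exists>a1 b1 a2 b2. w = [(a1,b1),(a2,b2)]"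
  by (auto simp: numeral_2_eq_2 length_Suc_conv)

lemma ext2I:
  assumes "\<And>a1 b1 a2 b2. f [(a1,b1),(a2,b2)] = g [(a1,b1),(a2,b2)]" "\<And>x. length x \<noteq> 2 \<Longrightarrow> f x = g x"
  shows "f = g"
proof
  fix x show "f x = g x"
  proof (cases "length x = 2")
    case True then obtain a1 b1 a2 b2 where "x = [(a1,b1),(a2,b2)]" using len2 by blast
    then show ?thesis using assms(1) by simp
  qed (use assms(2) in auto)
qed

lemma basis_len2: "length x \<noteq> 2 \<Longrightarrow> basis_el [u,v] x = 0"
  by (auto simp: basis_el_def)

definition "R2x = tadd (basis_el [(0,0),(0,0)])
  (tadd (basis_el [(0,0),(n,0)])
  (tadd (basis_el [(n,0),(0,0)])
  (tadd (tscale (-1) (basis_el [(n,0),(n,0)]))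
  (tadd (tscale (2*a) (basis_el [(0,1),(0,1)]))
  (tadd (tscale (2*a) (basis_el [(n,1),(0,1)]))
  (tadd (tscale (-2*a) (basis_el [(0,1),(n,1)]))
  (tscale (2*a) (basis_el [(n,1),(n,1)]))))))))"

lemma Rx_R2x: "Rx = tscale (1/2) R2x"
  by (rule ext) (simp add: Rx_def R2x_def pw_eval algebra_simps)

lemma comm0:
  assumes i: "i < 2*n"
  shows "tmul n q 2 (flip2 (Delta_basis n q a [(i,0)])) R2x = tmul n q 2 R2x (Delta_basis n q a [(i,0)])"
proof -
  define j where "j = (n + i) mod (2*n)"
  have j: "j < 2*n" by (simp add: j_def)
  have jr: "(n + i) mod (2*n) = j" "(i + n) mod (2*n) = j" by (simp_all add: j_def add.commute)
  have jb: "(n + j) mod (2*n) = i" "(j + n) mod (2*n) = i"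
    using i n1 by (auto simp: j_def mod_if add.commute)
  have pj: "p ^ j = - (p ^ i)"
  proof -
    have "p ^ j = p ^ (n + i)" unfolding j_def by (rule power_mod_eq) simp
    then show ?thesis by (simp add: power_add)
  qed
  have ij: "i \<noteq> j" "j \<noteq> i" using i n1 by (auto simp: j_def mod_if split: if_split_asm)
  have p2i: "p ^ (2*i) = p ^ i * p ^ i" by (simp add: mult_2 power_add)
  show ?thesis
    unfolding R2x_def Db0[OF i] jr
    apply (simp add: bsimp i j jb jr pj ij p2i)
    apply (rule ext2I)
     apply (simp only: pw_eval)
     subgoal for a1 b1 a2 b2
       apply (cases "a1 = i \<or> a1 = j"; cases "a2 = i \<or> a2 = j"; cases "b1 = 0 \<or> b1 = 1"; cases "b2 = 0 \<or> b2 = 1")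
       apply (auto simp: ij algebra_simps)
       done
    apply (simp add: pw_eval(1,2) basis_len2)
    done
qed
lemma comm1:
  assumes i: "i < 2*n"
  shows "tmul n q 2 (flip2 (Delta_basis n q a [(i,1)])) R2x = tmul n q 2 R2x (Delta_basis n q a [(i,1)])"
proof -
  define j where "j = (n + i) mod (2*n)"
  have j: "j < 2*n" by (simp add: j_def)
  have jr: "(n + i) mod (2*n) = j" "(i + n) mod (2*n) = j" by (simp_all add: j_def add.commute)
  have jb: "(n + j) mod (2*n) = i" "(j + n) mod (2*n) = i"
    using i n1 by (auto simp: j_def mod_if add.commute)
  have pj: "p ^ j = - (p ^ i)"
  proof -
    have "p ^ j = p ^ (n + i)" unfolding j_def by (rule power_mod_eq) simp
    then show ?thesis by (simp add: power_add)
  qed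
  have ij: "i \<noteq> j" "j \<noteq> i" using i n1 by (auto simp: j_def mod_if split: if_split_asm)
  have p2i: "p ^ (2*i) = p ^ i * p ^ i" by (simp add: mult_2 power_add)
  show ?thesis
    unfolding R2x_def Db1[OF i] jr
    apply (simp add: bsimp i j jb jr pj ij p2i)
    apply (rule ext2I)
     apply (simp only: pw_eval)
     subgoal for a1 b1 a2 b2
       apply (cases "a1 = i \<or> a1 = j"; cases "a2 = i \<or> a2 = j"; cases "b1 = 0 \<or> b1 = 1"; cases "b2 = 0 \<or> b2 = 1")
       apply (auto simp: ij algebra_simps)
       done
    apply (simp add: pw_eval(1,2) basis_len2)
    done
qed
end
context H4 begin

lemma E_eq: "Eidem n q s = tscale (inverse (of_nat (2*n))) (tsum (\<lambda>i. tscale (p^(i*s)) (basis_el [(i,0)])) {..<2*n})"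
  unfolding Eidem_def
  by (intro arg_cong[where f="tscale _"] tsum_cong) (simp add: zpow_eq)

lemma Ex_eq: "Hmul n q (Eidem n q s) xgen = tscale (inverse (of_nat (2*n))) (tsum (\<lambda>i. tscale (p^(i*s)) (basis_el [(i,1)])) {..<2*n})"
  unfolding E_eq Hmul_def tmul_tscale_left tmul_tsum_left
  by (intro arg_cong[where f="tscale _"] tsum_cong) (simp add: xgen_def bsimp)

lemma tsum_basis_eval: "tsum (\<lambda>i. tscale (c i) (basis_el [(i,e)])) {..<M} [(x,d)] = (if d = e \<and> x < M then c x else (0::'k))"
proof -
  have "tsum (\<lambda>i. tscale (c i) (basis_el [(i,e)])) {..<M} [(x,d)] = (\<Sum>i<M. if i = x then (if d = e then c i else 0) else 0)"
    unfolding tsum_def tscale_def basis_el_def by (intro sum.cong refl) auto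
  also have "\<dots> = (if d = e \<and> x < M then c x else 0)" by (simp add: sum.delta')
  finally show ?thesis .
qed


lemma tsum_prod: "tsum (\<lambda>(i,j). F i j) (A \<times> B) w = (\<Sum>i\<in>A. \<Sum>j\<in>B. F i j w)"
proof -
  have "(\<lambda>x. (case x of (i,j) \<Rightarrow> F i j) w) = (\<lambda>(i,j). F i j w)"
    by (auto simp: fun_eq_iff split: prod.split)
  have "(\<Sum>a\<in>A \<times> B. (case a of (i, j) \<Rightarrow> F i j) w) = (\<Sum>a\<in>A \<times> B. case a of (i, j) \<Rightarrow> F i j w)"
    by (rule sum.cong) (auto split: prod.split)
  then show ?thesis unfolding tsum_def by (simp add: sum.cartesian_product)
qed

lemma E_pt: "Eidem n q s [(x,d)] = inverse (of_nat (2*n)) * (if d = 0 \<and> x < 2*n then p^(x*s) else 0)"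
  unfolding E_eq by (simp only: pw(2) tsum_basis_eval)

lemma Ex_pt: "Hmul n q (Eidem n q s) xgen [(x,d)] = inverse (of_nat (2*n)) * (if d = 1 \<and> x < 2*n then p^(x*s) else 0)"
  unfolding Ex_eq by (simp only: pw(2) tsum_basis_eval)

lemma sum_if_factor: "(\<Sum>s<M. \<Sum>t<M. c s t * ((k * (if C1 then f s else 0)) * (k * (if C2 then g t else 0)))) =
  (if C1 \<and> C2 then k * k * (\<Sum>s<M. \<Sum>t<M. c s t * (f s * g t)) else (0::'k))"
  by (auto simp: sum_distrib_left mult_ac)

definition "G1s x y = (\<Sum>s<2*n. \<Sum>t<2*n. (-1)^(s*t) * (p^(x*s) * p^(y*t)))"
definition "G2s x y = (\<Sum>s<2*n. \<Sum>t<2*n. (-1)^(s*(t+1)) * (p^(x*s) * p^(y*t)))"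

lemma Rmat_pt: "Rmat n q a [(a1,b1),(a2,b2)] =
   (if (b1 = 0 \<and> a1 < 2*n) \<and> (b2 = 0 \<and> a2 < 2*n) then inverse (of_nat (2*n)) * inverse (of_nat (2*n)) * G1s a1 a2 else 0)
   + 2 * a * (if (b1 = 1 \<and> a1 < 2*n) \<and> (b2 = 1 \<and> a2 < 2*n) then inverse (of_nat (2*n)) * inverse (of_nat (2*n)) * G2s a1 a2 else 0)"
proof -
  have T: "ttensor 1 1 f g [(a1,b1),(a2,b2)] = f [(a1,b1)] * g [(a2,b2)]" for f g :: "'k tens"
    by (simp add: ttensor_def)
  show ?thesis
    unfolding Rmat_def tadd_def tscale_def[of "2*a"] tsum_prod tscale_def T E_pt Ex_pt G1s_def G2s_def
    by (simp only: sum_if_factor)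
qed


definition "c1 x y = (if y = 0 then (if x = 0 \<or> x = n then 1 else 0)
     else if y = n then (if x = 0 then 1 else if x = n then -1 else 0) else (0::'k))"
definition "c2 x y = (if y = 0 then (if x = 0 \<or> x = n then 1 else 0)
     else if y = n then (if x = 0 then -1 else if x = n then 1 else 0) else (0::'k))"

lemma half: "inverse (of_nat (2*n)) * inverse (of_nat (2*n)) * (of_nat (2*n) * (of_nat n * c)) = (1/2::'k) * c"
proof -
  have m: "(of_nat n :: 'k) \<noteq> 0" using n1 by simp
  have "inverse (of_nat (2*n)) * inverse (of_nat (2*n)) * (of_nat (2*n) * (of_nat n * c)) =
     inverse (2 * of_nat n) * inverse (2 * of_nat n) * ((2 * of_nat n) * (of_nat n * c :: 'k))" by simp
  also have "\<dots> = (1/2) * c" using m by (simp add: field_simps)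
  finally show ?thesis .
qed

lemma G1s_eq: "x < 2*n \<Longrightarrow> y < 2*n \<Longrightarrow> inverse (of_nat (2*n)) * inverse (of_nat (2*n)) * G1s x y = 1/2 * c1 x y"
proof -
  assume x: "x < 2*n" and y: "y < 2*n"
  have "(if y = 0 then (if x = 0 \<or> x = n then of_nat n else 0)
     else if y = n then (if x = 0 then of_nat n else if x = n then - of_nat n else 0) else 0) = (of_nat n * c1 x y :: 'k)"
    by (simp add: c1_def)
  then have "inverse (of_nat (2*n)) * inverse (of_nat (2*n)) * G1s x y =
     inverse (of_nat (2*n)) * inverse (of_nat (2*n)) * (of_nat (2*n) * (of_nat n * c1 x y))"
    unfolding G1s_def G1[OF x y] by simp
  then show ?thesis by (simp only: half)
qed

lemma G2s_eq: "x < 2*n \<Longrightarrow> y < 2*n \<Longrightarrow> inverse (of_nat (2*n)) * inverse (of_nat (2*n)) * G2s x y = 1/2 * c2 x y"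
proof -
  assume x: "x < 2*n" and y: "y < 2*n"
  have "(if y = 0 then (if x = 0 \<or> x = n then of_nat n else 0)
     else if y = n then (if x = 0 then - of_nat n else if x = n then of_nat n else 0) else 0) = (of_nat n * c2 x y :: 'k)"
    by (simp add: c2_def)
  then have "inverse (of_nat (2*n)) * inverse (of_nat (2*n)) * G2s x y =
     inverse (of_nat (2*n)) * inverse (of_nat (2*n)) * (of_nat (2*n) * (of_nat n * c2 x y))"
    unfolding G2s_def G2[OF x y] by simp
  then show ?thesis by (simp only: half)
qed

lemma Rmat_pt2: "Rmat n q a [(a1,b1),(a2,b2)] =
   (if (b1 = 0 \<and> a1 < 2*n) \<and> (b2 = 0 \<and> a2 < 2*n) then 1/2 * c1 a1 a2 else 0)
   + 2 * a * (if (b1 = 1 \<and> a1 < 2*n) \<and> (b2 = 1 \<and> a2 < 2*n) then 1/2 * c2 a1 a2 else 0)"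
  unfolding Rmat_pt by (simp only: G1s_eq G2s_eq cong: if_cong)


lemma Rmat_Rx: "Rmat n q a = Rx"
proof (rule ext2I)
  fix a1 b1 a2 b2
  show "Rmat n q a [(a1,b1),(a2,b2)] = Rx [(a1,b1),(a2,b2)]"
    unfolding Rmat_pt2 Rx_def c1_def c2_def pw
    by (cases "a1 = 0 \<or> a1 = n"; cases "a2 = 0 \<or> a2 = n"; cases "b1 = 0 \<or> b1 = 1"; cases "b2 = 0 \<or> b2 = 1")
       (auto simp: field_simps)
next
  fix x :: "(nat \<times> nat) list" assume x: "length x \<noteq> 2"
  have "Rmat n q a x = 0"
    unfolding Rmat_def using x by (simp add: pw tsum_def ttensor_def split_def)
  moreover have "Rx x = 0"
    unfolding Rx_def using x by (simp add: pw(1,2) basis_len2)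
  ultimately show "Rmat n q a x = Rx x" by simp
qed

end
context H4 begin

lemma supp_Rx: "supported n 2 Rx"
  unfolding Rx_def by (simp add: supported_tadd supported_tscale supported_basis)

lemma supp_Rix: "supported n 2 Rix"
  unfolding Rix_def by (simp add: supported_tadd supported_tscale supported_basis)

lemma supported_flip2: "supported n 2 f \<Longrightarrow> supported n 2 (flip2 f)"
  unfolding supported_def flip2_def by (auto simp: Wd_def)

lemma Wd1: "u \<in> Wd n 1 \<Longrightarrow> \<exists>i e. u = [(i,e)] \<and> i < 2*n \<and> (e = 0 \<or> e = 1)"
  by (cases u) (auto simp: Wd_def)

lemma comm_basis:
  assumes u: "u \<in> Wd n 1"
  shows "tmul n q 2 (flip2 (Delta_basis n q a u)) Rx = tmul n q 2 Rx (Delta_basis n q a u)"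
proof -
  obtain i e where ie: "u = [(i,e)]" "i < 2*n" "e = 0 \<or> e = 1" using Wd1[OF u] by blast
  show ?thesis
    using ie comm0[OF ie(2)] comm1[OF ie(2)] unfolding Rx_R2x by auto
qed

lemma conj_basis:
  assumes u: "u \<in> Wd n 1"
  shows "flip2 (Delta_basis n q a u) = H2mul n q (H2mul n q Rx (Delta_basis n q a u)) Rix"
proof -
  let ?D = "Delta_basis n q a u"
  have s: "supported n 2 (flip2 ?D)"
    by (rule supported_flip2) (simp add: Delta_basis_def H2mul_def supported_tmul)
  have "H2mul n q (H2mul n q Rx ?D) Rix = tmul n q 2 (tmul n q 2 (flip2 ?D) Rx) Rix"
    unfolding H2mul_def comm_basis[OF u] ..
  also have "\<dots> = tmul n q 2 (flip2 ?D) (tmul n q 2 Rx Rix)"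
    by (rule tmul_assoc) simp
  also have "\<dots> = flip2 ?D"
    unfolding R_Ri using n1 s by (rule tone_right)
  finally show ?thesis by simp
qed

lemma conj_all: "Delta_op n q a h = H2mul n q (H2mul n q Rx (Delta n q a h)) Rix"
proof -
  have D: "Delta n q a h = tsum (\<lambda>u. tscale (h u) (Delta_basis n q a u)) (Wd n 1)"
    unfolding Delta_def by (rule linext_alt)
  have "Delta_op n q a h = tsum (\<lambda>u. tscale (h u) (flip2 (Delta_basis n q a u))) (Wd n 1)"
    unfolding Delta_op_def D by (simp add: flip2_tsum)
  also have "\<dots> = tsum (\<lambda>u. tscale (h u) (H2mul n q (H2mul n q Rx (Delta_basis n q a u)) Rix)) (Wd n 1)"
    by (intro tsum_cong) (simp add: conj_basis)
  also have "\<dots> = H2mul n q (H2mul n q Rx (Delta n q a h)) Rix"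
    unfolding D H2mul_def by (simp add: tmul_tsum_left tmul_tsum_right)
  finally show ?thesis .
qed

lemma qt: "quasi_triangular n q a (Rmat n q a)"
  unfolding quasi_triangular_def Rmat_Rx
  using supp_Rx supp_Rix R_Ri Ri_R conj_all DidR idDR
  by (auto simp: H2mul_def)

end

theorem mainTheorem3:
  fixes q a :: "'k::{alg_closed_field, field_char_0}" and n :: nat
  assumes "n \<ge> 1" and "primitive_root (2*n) q"
  shows "quasi_triangular n q a (Rmat n q a)"
proof -
  interpret H4 n q a
    using assms by unfold_locales (auto simp: primitive_root_def)
  show ?thesis by (rule qt)
qed

end
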